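(* Let $N\geq1$ be an integer and let $f\in L^2(\mathbb{T})$ be supported on an interval $I\subset\mathbb{T}$. Then $$\|\mathbb{E}^*_Nf\|_{L^2}\leq\Big(|I|+\frac{2}{N}\Big)^{1/2}\|f\|_{L^2}.$$
   Context: $\mathbb{T}$ is identified with $[0,1)$, with addition modulo $1$ and Lebesgue measure. For $x_0\in\mathbb{T}$ set $\tau_{x_0}f(x)=f(x-x_0)$, and set $\mathbb{E}^*_N=\frac1N\sum_{j=0}^{N-1}\tau_{j/N}$. *)

theory Defs
  imports "HOL-Analysis.Analysis"
begin

text \<open>The torus T is identified with [0,1) with Lebesgue measure; functions on T are
  functions real \<Rightarrow> complex of which only the values on [0,1) matter.\<close>

definition T_measure :: "real measure" where
  "T_measure = lebesgue_on {0..<1}"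

definition tau :: "real \<Rightarrow> (real \<Rightarrow> complex) \<Rightarrow> real \<Rightarrow> complex" where
  "tau x0 f = (\<lambda>x. f (frac (x - x0)))"

definition E_star :: "nat \<Rightarrow> (real \<Rightarrow> complex) \<Rightarrow> real \<Rightarrow> complex" where
  "E_star N f = (\<lambda>x. (1 / of_nat N) * (\<Sum>j<N. tau (real j / real N) f x))"

definition in_L2 :: "(real \<Rightarrow> complex) \<Rightarrow> bool" where
  "in_L2 f \<longleftrightarrow> f \<in> borel_measurable T_measure \<and> integrable T_measure (\<lambda>x. (cmod (f x))\<^sup>2)"

definition L2_norm :: "(real \<Rightarrow> complex) \<Rightarrow> real" where
  "L2_norm f = sqrt (LINT x|T_measure. (cmod (f x))\<^sup>2)"

text \<open>Closed arc of T starting at a with length l (0 \<le> l \<le> 1): its measure is l.\<close>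
definition arc :: "real \<Rightarrow> real \<Rightarrow> real set" where
  "arc a l = frac ` {a..a+l}"

end

theory Submission
  imports Defs
begin


lemma lebesgue_translate_meas: "(\<lambda>x::real. t + x) \<in> lebesgue \<rightarrow>\<^sub>M lebesgue"
  using lebesgue_affine_measurable[where c="\<lambda>_. 1::real" and t=t] by simp

lemma nn_translate: fixes F :: "real \<Rightarrow> ennreal"
  assumes "F \<in> borel_measurable lebesgue"
  shows "(\<integral>\<^sup>+x. F x \<partial>lebesgue) = (\<integral>\<^sup>+x. F (t + x) \<partial>lebesgue)"
  using nn_integral_real_affine_lebesgue[OF assms, of 1 t] by simp

lemma shift_lemma:
  fixes g :: "real \<Rightarrow> ennreal"
  assumes g: "g \<in> borel_measurable T_measure" and c: "0 \<le> c" "c < 1"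
  shows "(\<lambda>x. g (frac (x - c))) \<in> borel_measurable T_measure"
    and "(\<integral>\<^sup>+x. g (frac (x - c)) \<partial>T_measure) = (\<integral>\<^sup>+x. g x \<partial>T_measure)"
proof -
  define U where "U = {0..<1::real}"
  have Us: "U \<inter> space lebesgue \<in> sets lebesgue" unfolding U_def by simp
  define G where "G x = g x * indicator U x" for x
  have Gm: "G \<in> borel_measurable lebesgue"
    using g Us unfolding T_measure_def U_def G_def
    by (simp add: borel_measurable_restrict_space_iff_ennreal)
  have Gm1: "(\<lambda>x. G (t + x)) \<in> borel_measurable lebesgue" for t
    using measurable_compose[OF lebesgue_translate_meas Gm] by (simp add: o_def)
  have Um1: "(\<lambda>x. indicator U (t + x) :: ennreal) \<in> borel_measurable lebesgue" for t
    using measurable_compose[OF lebesgue_translate_meas, of "indicator U :: real \<Rightarrow> ennreal" borel t] Us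
    by (simp add: o_def)
  have pw: "g (frac (x - c)) * indicator U x = (G (- c + x) + G ((1 - c) + x)) * indicator U x" for x
  proof (cases "x \<in> U")
    case True
    show ?thesis
    proof (cases "c \<le> x")
      case True
      then have "frac (x - c) = x - c" using \<open>x \<in> U\<close> c by (simp add: frac_eq U_def)
      then show ?thesis using True \<open>x \<in> U\<close> c by (simp add: G_def U_def indicator_def)
    next
      case False
      then have "frac (x - c) = 1 - c + x" using \<open>x \<in> U\<close> c
        by (subst frac_unique_iff) (auto simp: U_def intro: exI[of _ "-1"])
      then show ?thesis using False \<open>x \<in> U\<close> c by (simp add: G_def U_def indicator_def)
    qed
  qed simp
  have meas2: "(\<lambda>x. (G (- c + x) + G ((1 - c) + x)) * indicator U x) \<in> borel_measurable lebesgue"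
    using Gm1[of "-c"] Gm1[of "1-c"] Us
    by (intro borel_measurable_times_ennreal borel_measurable_add borel_measurable_indicator) (auto simp: U_def)
  show m: "(\<lambda>x. g (frac (x - c))) \<in> borel_measurable T_measure"
    unfolding T_measure_def
    using meas2 Us pw unfolding U_def
    by (simp add: borel_measurable_restrict_space_iff_ennreal)
  have "(\<integral>\<^sup>+x. g (frac (x - c)) \<partial>T_measure) = (\<integral>\<^sup>+x. (G (- c + x) + G ((1 - c) + x)) * indicator U x \<partial>lebesgue)"
    unfolding T_measure_def using Us pw unfolding U_def by (simp add: nn_integral_restrict_space)
  also have "\<dots> = (\<integral>\<^sup>+x. G (- c + x) * indicator U x \<partial>lebesgue) + (\<integral>\<^sup>+x. G ((1 - c) + x) * indicator U x \<partial>lebesgue)"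
    using Gm1[of "-c"] Gm1[of "1-c"] Us
    by (subst nn_integral_add[symmetric])
       (auto simp: distrib_right intro!: borel_measurable_times_ennreal borel_measurable_indicator simp del: uminus_add_conv_diff)
  also have "(\<integral>\<^sup>+x. G (- c + x) * indicator U x \<partial>lebesgue) = (\<integral>\<^sup>+x. G x * indicator U (x + c) \<partial>lebesgue)"
  proof -
    have "(\<integral>\<^sup>+x. G x * indicator U (c + x) \<partial>lebesgue) = (\<integral>\<^sup>+x. G (-c + x) * indicator U (c + (-c + x)) \<partial>lebesgue)"
      by (rule nn_translate[where F="\<lambda>x. G x * indicator U (c + x)"])
         (use Gm Um1 in \<open>auto intro!: borel_measurable_times_ennreal\<close>)
    then show ?thesis by (simp add: add.commute)
  qed
  also have "(\<integral>\<^sup>+x. G ((1 - c) + x) * indicator U x \<partial>lebesgue) = (\<integral>\<^sup>+x. G x * indicator U (x + c - 1) \<partial>lebesgue)"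
  proof -
    have "(\<integral>\<^sup>+x. G x * indicator U ((c - 1) + x) \<partial>lebesgue) = (\<integral>\<^sup>+x. G ((1-c) + x) * indicator U ((c - 1) + ((1-c) + x)) \<partial>lebesgue)"
      by (rule nn_translate[where F="\<lambda>x. G x * indicator U ((c - 1) + x)"])
         (use Gm Um1 in \<open>auto intro!: borel_measurable_times_ennreal\<close>)
    then show ?thesis by (simp add: algebra_simps)
  qed
  also have "(\<integral>\<^sup>+x. G x * indicator U (x + c) \<partial>lebesgue) + (\<integral>\<^sup>+x. G x * indicator U (x + c - 1) \<partial>lebesgue)
      = (\<integral>\<^sup>+x. G x * indicator U (x + c) + G x * indicator U (x + c - 1) \<partial>lebesgue)"
    using Gm Um1[of c] Um1[of "c - 1"]
    by (subst nn_integral_add) (auto intro!: borel_measurable_times_ennreal simp: add.commute add_diff_eq)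
  also have "\<dots> = (\<integral>\<^sup>+x. G x \<partial>lebesgue)"
  proof (rule nn_integral_cong)
    fix x
    show "G x * indicator U (x + c) + G x * indicator U (x + c - 1) = G x"
      using c by (cases "x \<in> U"; cases "x + c < 1") (auto simp: G_def U_def indicator_def)
  qed
  also have "\<dots> = (\<integral>\<^sup>+x. g x \<partial>T_measure)"
    unfolding T_measure_def G_def using Us unfolding U_def by (simp add: nn_integral_restrict_space)
  finally show "(\<integral>\<^sup>+x. g (frac (x - c)) \<partial>T_measure) = (\<integral>\<^sup>+x. g x \<partial>T_measure)" .
qed



lemma count_arc:
  fixes N :: nat and x a l :: real
  assumes N: "N \<ge> 1" and l: "0 \<le> l"
  shows "real (card {j\<in>{..<N}. frac (x - real j / real N) \<in> arc a l}) \<le> l * real N + 1"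
proof -
  define A where "A = {j\<in>{..<N}. frac (x - real j / real N) \<in> arc a l}"
  have ex: "\<exists>k::int. a \<le> x - real j / real N + k \<and> x - real j / real N + k \<le> a + l" if "j \<in> A" for j
  proof -
    from that obtain z where z: "a \<le> z" "z \<le> a + l" "frac (x - real j / real N) = frac z"
      unfolding A_def arc_def by auto
    show ?thesis
      by (rule exI[of _ "\<lfloor>z\<rfloor> - \<lfloor>x - real j / real N\<rfloor>"]) (use z in \<open>auto simp: frac_def\<close>)
  qed
  then obtain kf :: "nat \<Rightarrow> int" where kf: "\<And>j. j \<in> A \<Longrightarrow> a \<le> x - real j / real N + kf j \<and> x - real j / real N + kf j \<le> a + l"
    by metis
  define u where "u = real N * (a - x)"
  define L where "L = real N * l"
  define \<phi> where "\<phi> j = int N * kf j - int j" for j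
  have Npos: "real N > 0" using N by simp
  have inrange: "\<phi> j \<in> {\<lceil>u\<rceil>..\<lfloor>u + L\<rfloor>}" if "j \<in> A" for j
  proof -
    have h1: "a \<le> x - real j / real N + kf j" and h2: "x - real j / real N + kf j \<le> a + l"
      using kf[OF that] by auto
    have e: "real N * (x - real j / real N + kf j) = real N * x - real j + real N * kf j"
      using Npos by (simp add: field_simps)
    have "real N * a \<le> real N * x - real j + real N * kf j"
      using mult_left_mono[OF h1, of "real N"] e by simp
    moreover have "real N * x - real j + real N * kf j \<le> real N * a + real N * l"
      using mult_left_mono[OF h2, of "real N"] e by (simp add: distrib_left)
    ultimately have "u \<le> real_of_int (\<phi> j)" "real_of_int (\<phi> j) \<le> u + L"
      unfolding u_def L_def \<phi>_def by (auto simp: algebra_simps)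
    then show ?thesis by (auto simp: ceiling_le_iff le_floor_iff)
  qed
  have inj: "inj_on \<phi> A"
  proof (rule inj_onI)
    fix i j assume i: "i \<in> A" and j: "j \<in> A" and eq: "\<phi> i = \<phi> j"
    have "i < N" "j < N" using i j unfolding A_def by auto
    from eq have "int i - int j = int N * (kf i - kf j)" unfolding \<phi>_def by (simp add: algebra_simps)
    moreover have "\<bar>int i - int j\<bar> < int N" using \<open>i < N\<close> \<open>j < N\<close> by auto
    ultimately have "kf i - kf j = 0"
    proof (rule_tac ccontr)
      assume e: "int i - int j = int N * (kf i - kf j)" and lt: "\<bar>int i - int j\<bar> < int N"
        and ne: "kf i - kf j \<noteq> 0"
      have "1 \<le> \<bar>kf i - kf j\<bar>" using ne by linarith
      then have "int N * 1 \<le> int N * \<bar>kf i - kf j\<bar>" by (intro mult_left_mono) auto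
      also have "\<dots> = \<bar>int i - int j\<bar>" by (simp add: e abs_mult)
      finally show False using lt by simp
    qed
    with eq show "i = j" unfolding \<phi>_def by simp
  qed
  have "card A \<le> card {\<lceil>u\<rceil>..\<lfloor>u + L\<rfloor>}"
    by (rule card_inj_on_le[OF inj]) (use inrange in auto)
  also have "\<dots> = nat (\<lfloor>u + L\<rfloor> - \<lceil>u\<rceil> + 1)" by simp
  finally have c: "real (card A) \<le> real (nat (\<lfloor>u + L\<rfloor> - \<lceil>u\<rceil> + 1))" by linarith
  have f1: "real_of_int \<lfloor>u + L\<rfloor> \<le> u + L" "u \<le> real_of_int \<lceil>u\<rceil>" by auto
  have L0: "0 \<le> L" using l Npos unfolding L_def by simp
  have "real (nat (\<lfloor>u + L\<rfloor> - \<lceil>u\<rceil> + 1)) \<le> L + 1"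
  proof (cases "\<lfloor>u + L\<rfloor> - \<lceil>u\<rceil> + 1 \<ge> 0")
    case True
    then have "real (nat (\<lfloor>u + L\<rfloor> - \<lceil>u\<rceil> + 1)) = real_of_int (\<lfloor>u + L\<rfloor> - \<lceil>u\<rceil> + 1)"
      by (simp add: of_nat_nat)
    then show ?thesis using f1 by linarith
  next
    case False then show ?thesis using L0 by simp
  qed
  with c show ?thesis unfolding A_def L_def by (simp add: mult.commute)
qed



lemma pointwise:
  fixes N :: nat and f :: "real \<Rightarrow> complex" and a l x :: real
  assumes N: "N \<ge> 1" and l: "0 \<le> l"
    and P: "\<forall>j\<in>{..<N}. frac (x - real j / real N) \<notin> arc a l \<longrightarrow> f (frac (x - real j / real N)) = 0"
  shows "(cmod (E_star N f x))\<^sup>2 \<le> ((l * real N + 1) / (real N)\<^sup>2) * (\<Sum>j<N. (cmod (f (frac (x - real j / real N))))\<^sup>2)"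
proof -
  define z where "z j = f (frac (x - real j / real N))" for j
  define A where "A = {j\<in>{..<N}. frac (x - real j / real N) \<in> arc a l}"
  have Npos: "real N > 0" using N by simp
  have fA: "finite A" unfolding A_def by simp
  have E: "E_star N f x = (1 / of_nat N) * (\<Sum>j<N. z j)"
    unfolding E_star_def tau_def z_def by simp
  have s: "(\<Sum>j<N. z j) = (\<Sum>j\<in>A. z j)"
    by (rule sum.mono_neutral_right) (use P in \<open>auto simp: A_def z_def\<close>)
  have "cmod (\<Sum>j\<in>A. z j) \<le> (\<Sum>j\<in>A. cmod (z j))" by (rule norm_sum)
  then have "(cmod (\<Sum>j\<in>A. z j))\<^sup>2 \<le> (\<Sum>j\<in>A. cmod (z j))\<^sup>2"
    by (intro power_mono) auto
  also have "(\<Sum>j\<in>A. cmod (z j))\<^sup>2 = (\<Sum>j\<in>A. 1 * cmod (z j))\<^sup>2" by simp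
  also have "\<dots> \<le> (\<Sum>j\<in>A. 1\<^sup>2) * (\<Sum>j\<in>A. (cmod (z j))\<^sup>2)"
    by (rule Cauchy_Schwarz_ineq_sum)
  also have "\<dots> = real (card A) * (\<Sum>j\<in>A. (cmod (z j))\<^sup>2)" by simp
  also have "\<dots> \<le> (l * real N + 1) * (\<Sum>j<N. (cmod (z j))\<^sup>2)"
  proof (rule mult_mono)
    show "real (card A) \<le> l * real N + 1" unfolding A_def by (rule count_arc[OF N l])
    show "(\<Sum>j\<in>A. (cmod (z j))\<^sup>2) \<le> (\<Sum>j<N. (cmod (z j))\<^sup>2)"
      by (rule sum_mono2) (auto simp: A_def)
  qed (use l in \<open>auto intro: sum_nonneg\<close>)
  finally have main: "(cmod (\<Sum>j<N. z j))\<^sup>2 \<le> (l * real N + 1) * (\<Sum>j<N. (cmod (z j))\<^sup>2)"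
    using s by simp
  have "(cmod (E_star N f x))\<^sup>2 = (1 / real N)\<^sup>2 * (cmod (\<Sum>j<N. z j))\<^sup>2"
    unfolding E by (simp add: norm_mult power_mult_distrib norm_divide power_divide)
  also have "\<dots> \<le> (1 / real N)\<^sup>2 * ((l * real N + 1) * (\<Sum>j<N. (cmod (z j))\<^sup>2))"
    by (rule mult_left_mono[OF main]) simp
  finally show ?thesis unfolding z_def by (simp add: power_divide)
qed



theorem lemma2p6:
  fixes N :: nat and f :: "real \<Rightarrow> complex" and a l :: real
  assumes "N \<ge> 1"
    and "in_L2 f"
    and "0 \<le> l" and "l \<le> 1"
    and "AE x in T_measure. x \<notin> arc a l \<longrightarrow> f x = 0"
  shows "L2_norm (E_star N f) \<le> sqrt (l + 2 / real N) * L2_norm f"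
proof -
  let ?M = T_measure
  have N: "N \<ge> 1" and l: "0 \<le> l" using assms by auto
  have Npos: "real N > 0" using N by simp
  have fm[measurable]: "f \<in> borel_measurable ?M" and fi: "integrable ?M (\<lambda>x. (cmod (f x))\<^sup>2)"
    using assms(2) unfolding in_L2_def by auto
  have sp: "space ?M = {0..<1}" unfolding T_measure_def by simp
  define F where "F j x = f (frac (x - real j / real N))" for j x
  define g where "g y = ennreal ((cmod (f y))\<^sup>2)" for y
  have gm: "g \<in> borel_measurable ?M" unfolding g_def by measurable
  have c01: "0 \<le> real j / real N" "real j / real N < 1" if "j < N" for j
    using that Npos by (auto simp: divide_simps)
  have Fm: "(\<lambda>x. ennreal ((cmod (F j x))\<^sup>2)) \<in> borel_measurable ?M" if "j < N" for j
    using shift_lemma(1)[OF gm c01[OF that]] unfolding g_def F_def .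
  have Fi: "(\<integral>\<^sup>+x. ennreal ((cmod (F j x))\<^sup>2) \<partial>?M) = (\<integral>\<^sup>+x. g x \<partial>?M)" if "j < N" for j
    using shift_lemma(2)[OF gm c01[OF that]] unfolding g_def F_def .
  have ae1: "AE x in ?M. frac (x - real j / real N) \<notin> arc a l \<longrightarrow> F j x = 0" if "j < N" for j
  proof -
    from assms(5) obtain Z where Z: "{x \<in> space ?M. \<not> (x \<notin> arc a l \<longrightarrow> f x = 0)} \<subseteq> Z"
      "emeasure ?M Z = 0" "Z \<in> sets ?M"
      by (erule AE_E)
    have im: "(indicator Z :: real \<Rightarrow> ennreal) \<in> borel_measurable ?M" using Z(3) by simp
    have "(\<integral>\<^sup>+x. indicator Z (frac (x - real j / real N)) \<partial>?M) = (\<integral>\<^sup>+x. indicator Z x \<partial>?M)"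
      by (rule shift_lemma(2)[OF im c01[OF that]])
    also have "\<dots> = 0" using Z by simp
    finally have "AE x in ?M. (indicator Z (frac (x - real j / real N)) :: ennreal) = 0"
      by (subst nn_integral_0_iff_AE[symmetric]) (use shift_lemma(1)[OF im c01[OF that]] in auto)
    then show ?thesis
    proof (rule eventually_mono)
      fix x assume "(indicator Z (frac (x - real j / real N)) :: ennreal) = 0"
      then have nz: "frac (x - real j / real N) \<notin> Z" by (simp add: indicator_eq_0_iff)
      have "frac (x - real j / real N) \<in> space ?M" unfolding sp by (simp add: frac_lt_1)
      with nz Z(1) show "frac (x - real j / real N) \<notin> arc a l \<longrightarrow> F j x = 0"
        unfolding F_def by blast
    qed
  qed
  have ae: "AE x in ?M. \<forall>j\<in>{..<N}. frac (x - real j / real N) \<notin> arc a l \<longrightarrow> f (frac (x - real j / real N)) = 0"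
    using ae1 by (subst AE_finite_all) (auto simp: F_def)
  define C where "C = (l * real N + 1) / (real N)\<^sup>2"
  have C0: "C \<ge> 0" using l unfolding C_def by simp
  define I where "I = (LINT x|?M. (cmod (f x))\<^sup>2)"
  have I0: "I \<ge> 0" unfolding I_def by simp
  have gI: "(\<integral>\<^sup>+x. g x \<partial>?M) = ennreal I"
    unfolding g_def I_def by (rule nn_integral_eq_integral[OF fi]) simp
  have "(\<integral>\<^sup>+x. ennreal ((cmod (E_star N f x))\<^sup>2) \<partial>?M)
      \<le> (\<integral>\<^sup>+x. ennreal C * (\<Sum>j<N. ennreal ((cmod (F j x))\<^sup>2)) \<partial>?M)"
  proof (rule nn_integral_mono_AE)
    show "AE x in ?M. ennreal ((cmod (E_star N f x))\<^sup>2) \<le> ennreal C * (\<Sum>j<N. ennreal ((cmod (F j x))\<^sup>2))"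
      using ae
    proof (rule eventually_mono)
      fix x assume P: "\<forall>j\<in>{..<N}. frac (x - real j / real N) \<notin> arc a l \<longrightarrow> f (frac (x - real j / real N)) = 0"
      have "(cmod (E_star N f x))\<^sup>2 \<le> C * (\<Sum>j<N. (cmod (F j x))\<^sup>2)"
        using pointwise[OF N l P] unfolding C_def F_def .
      then have "ennreal ((cmod (E_star N f x))\<^sup>2) \<le> ennreal (C * (\<Sum>j<N. (cmod (F j x))\<^sup>2))"
        by (rule ennreal_leI)
      also have "\<dots> = ennreal C * ennreal (\<Sum>j<N. (cmod (F j x))\<^sup>2)"
        using C0 by (intro ennreal_mult) (auto intro: sum_nonneg)
      finally show "ennreal ((cmod (E_star N f x))\<^sup>2) \<le> ennreal C * (\<Sum>j<N. ennreal ((cmod (F j x))\<^sup>2))"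
        by simp
    qed
  qed
  also have "\<dots> = ennreal C * (\<Sum>j<N. (\<integral>\<^sup>+x. ennreal ((cmod (F j x))\<^sup>2) \<partial>?M))"
  proof -
    have sm: "(\<lambda>x. \<Sum>j<N. ennreal ((cmod (F j x))\<^sup>2)) \<in> borel_measurable ?M"
      by (rule borel_measurable_sum) (use Fm in auto)
    have "(\<integral>\<^sup>+x. ennreal C * (\<Sum>j<N. ennreal ((cmod (F j x))\<^sup>2)) \<partial>?M)
        = ennreal C * (\<integral>\<^sup>+x. (\<Sum>j<N. ennreal ((cmod (F j x))\<^sup>2)) \<partial>?M)"
      by (rule nn_integral_cmult[OF sm])
    also have "(\<integral>\<^sup>+x. (\<Sum>j<N. ennreal ((cmod (F j x))\<^sup>2)) \<partial>?M)
        = (\<Sum>j<N. (\<integral>\<^sup>+x. ennreal ((cmod (F j x))\<^sup>2) \<partial>?M))"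
      by (rule nn_integral_sum) (use Fm in auto)
    finally show ?thesis .
  qed
  also have "\<dots> = ennreal C * (real N * ennreal I)"
    using Fi gI by (simp add: ennreal_of_nat_eq_real_of_nat)
  also have "\<dots> = ennreal (C * real N * I)"
    using C0 I0 by (simp add: ennreal_mult mult.assoc)
  finally have nnle: "(\<integral>\<^sup>+x. ennreal ((cmod (E_star N f x))\<^sup>2) \<partial>?M) \<le> ennreal (C * real N * I)" .
  have CN: "C * real N \<le> l + 2 / real N"
    using Npos unfolding C_def by (simp add: field_simps power2_eq_square)
  have J: "(LINT x|?M. (cmod (E_star N f x))\<^sup>2) \<le> C * real N * I"
  proof (cases "integrable ?M (\<lambda>x. (cmod (E_star N f x))\<^sup>2)")
    case True
    have "ennreal (LINT x|?M. (cmod (E_star N f x))\<^sup>2) = (\<integral>\<^sup>+x. ennreal ((cmod (E_star N f x))\<^sup>2) \<partial>?M)"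
      by (rule nn_integral_eq_integral[OF True, symmetric]) simp
    with nnle have "ennreal (LINT x|?M. (cmod (E_star N f x))\<^sup>2) \<le> ennreal (C * real N * I)" by simp
    then show ?thesis using C0 I0 Npos by (simp add: ennreal_le_iff)
  next
    case False
    then show ?thesis using C0 I0 Npos by (simp add: not_integrable_integral_eq)
  qed
  also have "\<dots> \<le> (l + 2 / real N) * I" by (rule mult_right_mono[OF CN I0])
  finally have J2: "(LINT x|?M. (cmod (E_star N f x))\<^sup>2) \<le> (l + 2 / real N) * I" .
  have "L2_norm (E_star N f) \<le> sqrt ((l + 2 / real N) * I)"
    unfolding L2_norm_def by (rule real_sqrt_le_mono[OF J2])
  also have "\<dots> = sqrt (l + 2 / real N) * L2_norm f"
    unfolding L2_norm_def I_def by (simp add: real_sqrt_mult)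
  finally show ?thesis .
qed

end
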